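(* Let $n \geq 0$ be an integer, let $X$ and $A_1, \ldots, A_n$ be finite sets with $X$ nonempty (and each $A_i$ nonempty), and for each $1 \leq i \leq n$ let $f_i : X \to A_i$ be a function. Then $$\# \{ (x_0, \ldots, x_n) \in X^{n+1} : f_i(x_{i-1}) = f_i(x_i) \text{ for all } 1 \leq i \leq n \} \geq \frac{(\# X)^{n+1}}{\prod_{i=1}^n \# A_i}.$$
   Context: $\# S$ denotes the cardinality of a finite set $S$; an empty product equals $1$. *)

theory Defs
  imports "HOL-Library.FuncSet" Complex_Main
begin

end

theory Submission imports Defs begin

lemma lnJ:
  fixes a :: "'c \<Rightarrow> real"
  assumes "finite S" "S \<noteq> {}" "\<And>j. j \<in> S \<Longrightarrow> a j > 0"
  shows "(\<Sum>j\<in>S. ln (a j)) \<le> real (card S) * ln ((\<Sum>j\<in>S. a j) / real (card S))"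
proof -
  define N where "N = real (card S)"
  have N: "N > 0" using assms N_def by (simp add: card_gt_0_iff)
  define M where "M = (\<Sum>j\<in>S. a j) / N"
  have "(\<Sum>j\<in>S. a j) > 0" using assms by (intro sum_pos) auto
  note pos = this
  hence M: "M > 0" using N M_def by simp
  have "(\<Sum>j\<in>S. ln (a j) - ln M) \<le> (\<Sum>j\<in>S. a j / M - 1)"
  proof (rule sum_mono)
    fix j assume "j \<in> S"
    hence "ln (a j / M) \<le> a j / M - 1" using assms M by (intro ln_le_minus_one) auto
    thus "ln (a j) - ln M \<le> a j / M - 1" using assms(3)[OF \<open>j\<in>S\<close>] M by (simp add: ln_div)
  qed
  also have "\<dots> = (\<Sum>j\<in>S. a j) / M - N" by (simp add: sum_subtractf sum_divide_distrib N_def)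
  also have "\<dots> = 0" using pos N M_def by simp
  finally have "(\<Sum>j\<in>S. ln (a j)) - N * ln M \<le> 0" by (simp add: sum_subtractf N_def)
  thus ?thesis by (simp add: N_def M_def)
qed

fun gg :: "(nat \<Rightarrow> 'a \<Rightarrow> 'b) \<Rightarrow> 'a set \<Rightarrow> nat \<Rightarrow> 'a \<Rightarrow> real" where
  "gg f X 0 y = 1"
| "gg f X (Suc k) y = (\<Sum>z\<in>{z\<in>X. f (Suc k) z = f (Suc k) y}. gg f X k z)"

lemma count:
  assumes "finite X" "y \<in> X"
  shows "real (card {x \<in> PiE {0..n} (\<lambda>_. X). (\<forall>i\<in>{1..n}. f i (x (i - 1)) = f i (x i)) \<and> x n = y}) = gg f X n y"
  using assms(2)
proof (induction n arbitrary: y)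
  case 0
  have "{x \<in> PiE {0..0} (\<lambda>_. X). (\<forall>i\<in>{1..0}. f i (x (i - 1)) = f i (x i)) \<and> x 0 = y}
        = {(\<lambda>_. undefined)(0 := y)}"
    using 0 by (auto simp: PiE_iff extensional_def fun_eq_iff)
  then show ?case by simp
next
  case (Suc n)
  define S where "S = {x \<in> PiE {0..Suc n} (\<lambda>_. X). (\<forall>i\<in>{1..Suc n}. f i (x (i - 1)) = f i (x i)) \<and> x (Suc n) = y}"
  define T where "T = (SIGMA z:{z\<in>X. f (Suc n) z = f (Suc n) y}. {x \<in> PiE {0..n} (\<lambda>_. X). (\<forall>i\<in>{1..n}. f i (x (i - 1)) = f i (x i)) \<and> x n = z})"
  have "bij_betw (\<lambda>x. (x n, restrict x {0..n})) S T"
  proof (rule bij_betw_byWitness[where f'="\<lambda>(z,w). w(Suc n := y)"])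
    show "\<forall>a\<in>S. (\<lambda>(z, w). w(Suc n := y)) (a n, restrict a {0..n}) = a"
      unfolding S_def by (auto simp: PiE_iff extensional_def fun_eq_iff le_Suc_eq)
    show "\<forall>a'\<in>T. (\<lambda>x. (x n, restrict x {0..n})) ((\<lambda>(z, w). w(Suc n := y)) a') = a'"
      unfolding T_def by (auto simp: PiE_iff extensional_def fun_eq_iff)
    show "(\<lambda>x. (x n, restrict x {0..n})) ` S \<subseteq> T"
    proof
      fix p assume "p \<in> (\<lambda>x. (x n, restrict x {0..n})) ` S"
      then obtain x where x: "x \<in> S" "p = (x n, restrict x {0..n})" by blast
      have h: "\<forall>i\<in>{1..Suc n}. f i (x (i - 1)) = f i (x i)" using x(1) unfolding S_def by blast
      have "f (Suc n) (x (Suc n - 1)) = f (Suc n) (x (Suc n))" using bspec[OF h, of "Suc n"] by simp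
      thus "p \<in> T" using x unfolding S_def T_def by (auto simp: PiE_iff extensional_def)
    qed
    show "(\<lambda>(z, w). w(Suc n := y)) ` T \<subseteq> S"
      unfolding S_def T_def using Suc.prems by (auto simp: PiE_iff extensional_def le_Suc_eq)
  qed
  hence "card S = card T" by (rule bij_betw_same_card)
  also have "card T = (\<Sum>z\<in>{z\<in>X. f (Suc n) z = f (Suc n) y}. card {x \<in> PiE {0..n} (\<lambda>_. X). (\<forall>i\<in>{1..n}. f i (x (i - 1)) = f i (x i)) \<and> x n = z})"
    unfolding T_def using assms(1) by (intro card_SigmaI) (auto intro!: finite_subset[where B="PiE {0..n} (\<lambda>_. X)"] finite_PiE)
  finally show ?case using Suc.IH unfolding S_def by simp
qed

lemma fiber_sum:
  fixes h :: "'a \<Rightarrow> 'b" and w :: "'a \<Rightarrow> real"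
  assumes "finite X"
  shows "(\<Sum>y\<in>X. (\<Sum>z\<in>{z\<in>X. h z = h y}. w z) / real (card {z\<in>X. h z = h y})) = (\<Sum>z\<in>X. w z)"
proof -
  have "(\<Sum>y\<in>X. (\<Sum>z\<in>{z\<in>X. h z = h y}. w z) / real (card {z\<in>X. h z = h y}))
     = (\<Sum>a\<in>h`X. \<Sum>y\<in>{y. y\<in>X \<and> h y = a}. (\<Sum>z\<in>{z\<in>X. h z = h y}. w z) / real (card {z\<in>X. h z = h y}))"
    by (rule sum.group[symmetric]) (auto simp: assms)
  also have "\<dots> = (\<Sum>a\<in>h`X. \<Sum>z\<in>{z. z\<in>X \<and> h z = a}. w z)"
  proof (rule sum.cong[OF refl])
    fix a assume "a \<in> h ` X"
    then obtain y0 where y0: "y0 \<in> X" "h y0 = a" by blast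
    have "(\<Sum>y\<in>{y. y\<in>X \<and> h y = a}. (\<Sum>z\<in>{z\<in>X. h z = h y}. w z) / real (card {z\<in>X. h z = h y}))
        = (\<Sum>y\<in>{y. y\<in>X \<and> h y = a}. (\<Sum>z\<in>{z. z\<in>X \<and> h z = a}. w z) / real (card {z. z\<in>X \<and> h z = a}))"
      by (rule sum.cong) auto
    also have "\<dots> = (\<Sum>z\<in>{z. z\<in>X \<and> h z = a}. w z)"
    proof -
      have "card {z. z\<in>X \<and> h z = a} > 0" using y0 assms by (subst card_gt_0_iff) auto
      thus ?thesis by simp
    qed
    finally show "(\<Sum>y\<in>{y. y\<in>X \<and> h y = a}. (\<Sum>z\<in>{z\<in>X. h z = h y}. w z) / real (card {z\<in>X. h z = h y}))
        = (\<Sum>z\<in>{z. z\<in>X \<and> h z = a}. w z)" .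
  qed
  also have "\<dots> = (\<Sum>z\<in>X. w z)"
    using sum.group[of X "h ` X" h w] assms by simp
  finally show ?thesis .
qed

lemma step:
  fixes h :: "'a \<Rightarrow> 'b" and u :: "'a \<Rightarrow> real"
  assumes X: "finite X" "X \<noteq> {}" and A: "finite A" "h ` X \<subseteq> A"
    and u: "\<And>y. y \<in> X \<Longrightarrow> u y > 0"
  shows "(\<Sum>y\<in>X. ln (\<Sum>z\<in>{z\<in>X. h z = h y}. u z))
     \<ge> (\<Sum>y\<in>X. ln (u y)) + real (card X) * (ln (real (card X)) - ln (real (card A)))"
proof -
  define c where "c y = real (card {z\<in>X. h z = h y})" for y
  define v where "v y = (\<Sum>z\<in>{z\<in>X. h z = h y}. u z)" for y
  have cpos: "c y > 0" if "y \<in> X" for y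
    using that X unfolding c_def by (subst of_nat_0_less_iff, subst card_gt_0_iff) auto
  have vpos: "v y > 0" if "y \<in> X" for y
    unfolding v_def using that X u by (intro sum_pos) auto
  have 1: "ln (v y) \<ge> ln (c y) + (\<Sum>z\<in>{z\<in>X. h z = h y}. ln (u z)) / c y" if y: "y \<in> X" for y
  proof -
    have "(\<Sum>z\<in>{z\<in>X. h z = h y}. ln (u z)) \<le> c y * ln (v y / c y)"
      unfolding c_def v_def using X y u by (intro lnJ) auto
    also have "\<dots> = c y * (ln (v y) - ln (c y))" using cpos[OF y] vpos[OF y] by (simp add: ln_div)
    finally show ?thesis using cpos[OF y] by (simp add: divide_simps algebra_simps)
  qed
  have 2: "(\<Sum>y\<in>X. (\<Sum>z\<in>{z\<in>X. h z = h y}. ln (u z)) / c y) = (\<Sum>y\<in>X. ln (u y))"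
    unfolding c_def by (rule fiber_sum[OF X(1)])
  have 3: "(\<Sum>y\<in>X. 1 / c y) = real (card (h ` X))"
  proof -
    have "(\<Sum>y\<in>X. 1 / c y) = (\<Sum>a\<in>h`X. \<Sum>y\<in>{y. y\<in>X \<and> h y = a}. 1 / c y)"
      by (rule sum.group[symmetric]) (auto simp: X)
    also have "\<dots> = (\<Sum>a\<in>h`X. 1)"
    proof (rule sum.cong[OF refl])
      fix a assume "a \<in> h ` X"
      then obtain y0 where y0: "y0 \<in> X" "h y0 = a" by blast
      have "(\<Sum>y\<in>{y. y\<in>X \<and> h y = a}. 1 / c y) = (\<Sum>y\<in>{y. y\<in>X \<and> h y = a}. 1 / real (card {z. z\<in>X \<and> h z = a}))"
        unfolding c_def by (rule sum.cong) auto
      also have "\<dots> = 1"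
      proof -
        have "card {z. z\<in>X \<and> h z = a} > 0" using y0 X by (subst card_gt_0_iff) auto
        thus ?thesis by simp
      qed
      finally show "(\<Sum>y\<in>{y. y\<in>X \<and> h y = a}. 1 / c y) = 1" .
    qed
    finally show ?thesis by simp
  qed
  have "(\<Sum>y\<in>X. ln (1 / c y)) \<le> real (card X) * ln ((\<Sum>y\<in>X. 1 / c y) / real (card X))"
    using X cpos by (intro lnJ) auto
  also have "\<dots> \<le> real (card X) * ln (real (card A) / real (card X))"
  proof -
    have "card (h ` X) > 0" using X by (simp add: card_gt_0_iff)
    moreover have "card (h ` X) \<le> card A" using A by (intro card_mono)
    moreover have "card X > 0" using X by (simp add: card_gt_0_iff)
    ultimately show ?thesis unfolding 3 by (intro mult_left_mono) (auto simp: divide_right_mono)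
  qed
  also have "\<dots> = real (card X) * (ln (real (card A)) - ln (real (card X)))"
  proof -
    have "card A > 0" using A X by (auto simp: card_gt_0_iff)
    moreover have "card X > 0" using X by (simp add: card_gt_0_iff)
    ultimately show ?thesis by (simp add: ln_div)
  qed
  finally have h4a: "(\<Sum>y\<in>X. ln (1 / c y)) \<le> real (card X) * (ln (real (card A)) - ln (real (card X)))" .
  have "(\<Sum>y\<in>X. ln (1 / c y)) = (\<Sum>y\<in>X. - ln (c y))"
    using cpos by (intro sum.cong) (auto simp: ln_div)
  hence 4: "(\<Sum>y\<in>X. ln (c y)) \<ge> real (card X) * (ln (real (card X)) - ln (real (card A)))"
    using h4a by (simp add: sum_negf algebra_simps)
  have "(\<Sum>y\<in>X. ln (v y)) \<ge> (\<Sum>y\<in>X. ln (c y) + (\<Sum>z\<in>{z\<in>X. h z = h y}. ln (u z)) / c y)"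
    using 1 by (rule sum_mono)
  also have "(\<Sum>y\<in>X. ln (c y) + (\<Sum>z\<in>{z\<in>X. h z = h y}. ln (u z)) / c y) = (\<Sum>y\<in>X. ln (c y)) + (\<Sum>y\<in>X. ln (u y))"
    by (simp add: sum.distrib 2)
  finally show ?thesis using 4 unfolding v_def by linarith
qed


lemma gg_ge1:
  assumes "finite X" "y \<in> X"
  shows "gg f X k y \<ge> 1"
  using assms(2)
proof (induction k arbitrary: y)
  case 0 then show ?case by simp
next
  case (Suc k)
  have "gg f X k y \<le> (\<Sum>z\<in>{z\<in>X. f (Suc k) z = f (Suc k) y}. gg f X k z)"
    using Suc assms(1) by (intro member_le_sum) (auto intro: order_trans[OF zero_le_one])
  moreover have "1 \<le> gg f X k y" by (rule Suc.IH[OF Suc.prems])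
  ultimately show ?case unfolding gg.simps by linarith
qed

theorem lemma2p1:
  fixes n :: nat and X :: "'a set" and A :: "nat \<Rightarrow> 'b set"
    and f :: "nat \<Rightarrow> 'a \<Rightarrow> 'b"
  assumes "finite X" and "X \<noteq> {}"
    and "\<And>i. i \<in> {1..n} \<Longrightarrow> finite (A i) \<and> A i \<noteq> {}"
    and "\<And>i. i \<in> {1..n} \<Longrightarrow> f i \<in> X \<rightarrow> A i"
  shows "real (card {x \<in> PiE {0..n} (\<lambda>_. X). \<forall>i\<in>{1..n}. f i (x (i - 1)) = f i (x i)})
           \<ge> real (card X) ^ (n + 1) / (\<Prod>i=1..n. real (card (A i)))"
proof -
  define N where "N = real (card X)"
  have N: "N > 0" using assms(1,2) N_def by (simp add: card_gt_0_iff)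
  have Apos: "real (card (A i)) > 0" if "i \<in> {1..n}" for i
    using assms(3)[OF that] by (simp add: card_gt_0_iff)
  have L: "k \<le> n \<Longrightarrow> (\<Sum>y\<in>X. ln (gg f X k y)) \<ge> N * (\<Sum>i=1..k. ln N - ln (real (card (A i))))" for k
  proof (induction k)
    case 0 then show ?case by simp
  next
    case (Suc k)
    have i: "Suc k \<in> {1..n}" using Suc.prems by simp
    have "(\<Sum>y\<in>X. ln (gg f X (Suc k) y)) \<ge> (\<Sum>y\<in>X. ln (gg f X k y)) + N * (ln N - ln (real (card (A (Suc k)))))"
      unfolding gg.simps N_def
      using assms(1,2) assms(3)[OF i] assms(4)[OF i]
      by (intro step) (auto intro: order_less_le_trans[OF zero_less_one gg_ge1])
    then show ?case using Suc by (simp add: algebra_simps)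
  qed
  define Q where "Q = {x \<in> PiE {0..n} (\<lambda>_. X). \<forall>i\<in>{1..n}. f i (x (i - 1)) = f i (x i)}"
  have finQ: "finite Q" unfolding Q_def
    using assms(1) by (auto intro!: finite_subset[where B="PiE {0..n} (\<lambda>_. X)"] finite_PiE)
  have "card Q = (\<Sum>x\<in>Q. 1::nat)" by simp
  also have "\<dots> = (\<Sum>y\<in>X. \<Sum>x\<in>{x. x \<in> Q \<and> x n = y}. 1)"
    using finQ assms(1) by (intro sum.group[symmetric]) (auto simp: Q_def PiE_iff)
  also have "\<dots> = (\<Sum>y\<in>X. card {x \<in> PiE {0..n} (\<lambda>_. X). (\<forall>i\<in>{1..n}. f i (x (i - 1)) = f i (x i)) \<and> x n = y})"
    unfolding Q_def by (intro sum.cong) (auto intro!: arg_cong[where f=card])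
  finally have "real (card Q) = (\<Sum>y\<in>X. real (card {x \<in> PiE {0..n} (\<lambda>_. X). (\<forall>i\<in>{1..n}. f i (x (i - 1)) = f i (x i)) \<and> x n = y}))"
    by simp
  also have "\<dots> = (\<Sum>y\<in>X. gg f X n y)"
    by (intro sum.cong refl count[OF assms(1)])
  finally have cardQ: "real (card Q) = (\<Sum>y\<in>X. gg f X n y)" .
  define G where "G = (\<Sum>y\<in>X. gg f X n y)"
  have gpos: "gg f X n y > 0" if "y \<in> X" for y using gg_ge1[OF assms(1) that, of f n] by simp
  have "(\<Sum>y\<in>X. ln (gg f X n y)) \<le> N * ln (G / N)"
    unfolding G_def N_def using assms(1,2) gpos by (intro lnJ) auto
  with L[of n] have "N * (\<Sum>i=1..n. ln N - ln (real (card (A i)))) \<le> N * ln (G / N)" by simp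
  hence "(\<Sum>i=1..n. ln N - ln (real (card (A i)))) \<le> ln (G / N)" using N by simp
  moreover have Gpos: "G > 0" unfolding G_def using assms(1,2) gpos by (intro sum_pos) auto
  ultimately have *: "(\<Sum>i=1..n. ln N - ln (real (card (A i)))) + ln N \<le> ln G"
    using N by (simp add: ln_div)
  have "ln (N ^ (n + 1) / (\<Prod>i=1..n. real (card (A i)))) = (n+1) * ln N - (\<Sum>i=1..n. ln (real (card (A i))))"
  proof -
    have p: "(\<Prod>i=1..n. real (card (A i))) > 0" by (rule prod_pos) (rule Apos)
    have a: "ln (N ^ (n + 1)) = real (n+1) * ln N" by (rule ln_realpow)
    have b: "ln (\<Prod>i=1..n. real (card (A i))) = (\<Sum>i=1..n. ln (real (card (A i))))"
      by (rule ln_prod[OF finite_atLeastAtMost]) (metis Apos less_irrefl)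
    have "ln (N ^ (n + 1) / (\<Prod>i=1..n. real (card (A i)))) = ln (N ^ (n + 1)) - ln (\<Prod>i=1..n. real (card (A i)))"
    proof -
      have q: "N ^ (n + 1) \<noteq> 0 \<and> (\<Prod>i=1..n. real (card (A i))) \<noteq> 0" using N p by (intro conjI) (simp, metis less_irrefl)
      show ?thesis by (simp only: ln_div q if_True not_False_eq_True conj_absorb)
    qed
    thus ?thesis using a b by simp
  qed
  also have "\<dots> = (\<Sum>i=1..n. ln N - ln (real (card (A i)))) + ln N"
    by (simp add: sum_subtractf algebra_simps)
  finally have "ln (N ^ (n + 1) / (\<Prod>i=1..n. real (card (A i)))) \<le> ln G" using * by simp
  moreover have "N ^ (n + 1) / (\<Prod>i=1..n. real (card (A i))) > 0"
    using N prod_pos[of "{1..n}" "\<lambda>i. real (card (A i))"] Apos by simp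
  ultimately have "N ^ (n + 1) / (\<Prod>i=1..n. real (card (A i))) \<le> G"
    using Gpos by simp
  thus ?thesis using cardQ unfolding G_def N_def Q_def by simp
qed

end
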